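(* Let $f_\theta$ be a neural network parameterized by $\theta$, with $\theta_l$ the parameters of its $l$-th layer, and let $\mathrm{DB\text{-}MLP}^l$ be its $l$-th doubly biased MLP block with input $X^{l-1}$ and zeroth bias $D^l$. Then for any sample $(x,y)$, \[ \|\nabla_{\theta_l}\mathcal{L}_{\mathrm{CE}}(\theta,(x,y))\|_2^2\ \ge\ \|\nabla_{X^{l-1}}\mathcal{L}_{\mathrm{CE}}(\theta,(x,y))\|_2^2+\|H^l(X^{l-1}+D^l)^\top\|_2^2+\|G_V^l(A^l)^\top\|_2^2 . \] If the block is not doubly biased, the first term on the right-hand side disappears.
   Context: $\mathcal{L}_{\mathrm{CE}}(\theta,(x,y))=-\log f(y\mid\theta,x)$ is the Cross-Entropy loss. The DB-MLP block receives $X^{l-1}\in\mathbb{R}^{d\times k}$ (tokens as columns), has zeroth bias $D^l\in\mathbb{R}^{d\times k}$, key matrix $K^l\in\mathbb{R}^{n\times d}$, key bias $b_K^l$, value matrix $V^l\in\mathbb{R}^{d\times n}$, value bias $b_V^l$, computes $A^l=\sigma(K^l(X^{l-1}+D^l)+b_K^l\mathbf1^\top)$ and $Z^l=V^lA^l+b_V^l\mathbf1^\top$ (entrywise activation $\sigma$), and $X^{l-1}$ is used only through $X^{l-1}+D^l$ (the block's first operation). The parameters $\theta_l$ include at least $K^l,V^l,D^l$. $\Gamma^l=\sigma'(K^l(X^{l-1}+D^l)+b_K^l\mathbf1^\top)$ entrywise, $G_K^l=\partial\mathcal{L}_{\mathrm{CE}}/\partial A^l$, $G_V^l=\partial\mathcal{L}_{\mathrm{CE}}/\partial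 Z^l$, $H^l=G_K^l\odot\Gamma^l$ (Hadamard product). Matrix norms are Frobenius norms. *)

theory Defs
  imports "HOL-Analysis.Analysis"
begin

text \<open>Matrices: a d x k matrix is an element of real^'k^'d (rows indexed by 'd).
 The norm on real^'k^'d is the Frobenius norm; on products it is the Euclidean
 norm of the pair of norms, i.e. the norm of the concatenated parameter vector.\<close>

definition grad :: "('a::real_inner \<Rightarrow> real) \<Rightarrow> 'a \<Rightarrow> 'a" where
  "grad F x = (THE g. (F has_derivative (\<lambda>h. g \<bullet> h)) (at x))"

definition bcast :: "real^'m \<Rightarrow> real^'k^'m" where
  "bcast b = (\<chi> i j. b $ i)"

definition entrywise :: "(real \<Rightarrow> real) \<Rightarrow> real^'k^'m \<Rightarrow> real^'k^'m" where
  "entrywise \<sigma> M = (\<chi> i j. \<sigma> (M $ i $ j))"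

definition hadamard :: "real^'k^'m \<Rightarrow> real^'k^'m \<Rightarrow> real^'k^'m" where
  "hadamard A B = (\<chi> i j. A $ i $ j * B $ i $ j)"

definition preact :: "real^'d^'n \<Rightarrow> real^'n \<Rightarrow> real^'k^'d \<Rightarrow> real^'k^'d \<Rightarrow> real^'k^'n" where
  "preact K bK X D = K ** (X + D) + bcast bK"

definition blockA :: "(real \<Rightarrow> real) \<Rightarrow> real^'d^'n \<Rightarrow> real^'n \<Rightarrow> real^'k^'d \<Rightarrow> real^'k^'d \<Rightarrow> real^'k^'n" where
  "blockA \<sigma> K bK X D = entrywise \<sigma> (preact K bK X D)"

definition blockZ :: "(real \<Rightarrow> real) \<Rightarrow> real^'d^'n \<Rightarrow> real^'n \<Rightarrow> real^'n^'d \<Rightarrow> real^'d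
    \<Rightarrow> real^'k^'d \<Rightarrow> real^'k^'d \<Rightarrow> real^'k^'d" where
  "blockZ \<sigma> K bK V bV X D = V ** blockA \<sigma> K bK X D + bcast bV"

text \<open>Cross-entropy loss -log f(y | theta, x), where the probability f(y|theta,x) of the
 label depends on the layer-l block only through its output Z^l and on the remaining
 layer-l parameters psi; F (Z, psi) is that probability (all other network parameters,
 the input x and the label y are fixed and absorbed into F).\<close>
definition ceZ :: "((real^'k^'d) \<times> 'e \<Rightarrow> real) \<Rightarrow> real^'k^'d \<Rightarrow> 'e \<Rightarrow> real" where
  "ceZ F Z \<psi> = - ln (F (Z, \<psi>))"

text \<open>Loss as a function of the block input X^{l-1} and the layer parameters
 theta_l = (D, K, b_K, V, b_V, psi).\<close>
definition loss :: "(real \<Rightarrow> real) \<Rightarrow> ((real^'k^'d) \<times> 'e \<Rightarrow> real) \<Rightarrow> real^'k^'d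
   \<Rightarrow> (real^'k^'d) \<times> (real^'d^'n) \<times> (real^'n) \<times> (real^'n^'d) \<times> (real^'d) \<times> 'e \<Rightarrow> real" where
  "loss \<sigma> F X \<theta> = (case \<theta> of (D, K, bK, V, bV, \<psi>) \<Rightarrow> ceZ F (blockZ \<sigma> K bK V bV X D) \<psi>)"

end

theory Submission
  imports Defs
begin

lemma matrix_add_rdistrib': "((A::real^'m^'n) + B) ** C = A ** C + B ** C"
  unfolding matrix_matrix_mult_def vec_eq_iff by (simp add: distrib_right sum.distrib)

lemma grad_unique:
  fixes f :: "'a::euclidean_space \<Rightarrow> real"
  assumes "(f has_derivative (\<lambda>h. g \<bullet> h)) (at x)"
  shows "grad f x = g"
  unfolding grad_def
proof (rule the_equality)
  fix g' assume "(f has_derivative (\<lambda>h. g' \<bullet> h)) (at x)"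
  then have "(\<lambda>h. g' \<bullet> h) = (\<lambda>h. g \<bullet> h)" using assms by (rule has_derivative_unique)
  then have "g' \<bullet> (g' - g) = g \<bullet> (g' - g)" by metis
  then have "(g' - g) \<bullet> (g' - g) = 0" by (simp add: inner_diff_left)
  then show "g' = g" by simp
qed (rule assms)

lemma grad_works:
  fixes f :: "'a::euclidean_space \<Rightarrow> real"
  assumes d: "(f has_derivative f') (at x)"
  shows "f' h = grad f x \<bullet> h" "(f has_derivative (\<lambda>h. grad f x \<bullet> h)) (at x)"
proof -
  have lin: "linear f'" using d has_derivative_linear by blast
  have eq: "f' = (\<lambda>h. adjoint f' 1 \<bullet> h)"
  proof
    fix h show "f' h = adjoint f' 1 \<bullet> h"
      using adjoint_works[OF lin, of h 1] by (simp add: inner_commute)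
  qed
  have "grad f x = adjoint f' 1" using d eq by (intro grad_unique) simp
  then show "f' h = grad f x \<bullet> h" "(f has_derivative (\<lambda>h. grad f x \<bullet> h)) (at x)"
    using eq d by (metis)+
qed

lemma vec_has_derivative:
  fixes f :: "'a::real_normed_vector \<Rightarrow> 'b::euclidean_space^'n"
  assumes "\<And>i. ((\<lambda>x. f x $ i) has_derivative (\<lambda>h. f' h $ i)) (at a)"
  shows "(f has_derivative f') (at a)"
proof -
  have "(f has_derivative f') (at a within UNIV)"
  proof (rule has_derivative_componentwise_within[THEN iffD2], rule ballI)
    fix v :: "'b^'n" assume "v \<in> Basis"
    then obtain i b where v: "v = axis i b" and b: "b \<in> Basis" by (auto simp: Basis_vec_def)
    have "((\<lambda>x. f x $ i \<bullet> b) has_derivative (\<lambda>x. f' x $ i \<bullet> b)) (at a)"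
      by (rule bounded_linear.has_derivative[OF bounded_linear_inner_left assms])
    then show "((\<lambda>x. f x \<bullet> v) has_derivative (\<lambda>x. f' x \<bullet> v)) (at a within UNIV)"
      by (simp add: v inner_axis)
  qed
  then show ?thesis by simp
qed

lemma bilinear_matmul: "bounded_bilinear (\<lambda>(A::real^'m^'n) (B::real^'k^'m). A ** B)"
proof -
  have "bilinear (\<lambda>(A::real^'m^'n) (B::real^'k^'m). A ** B)"
    unfolding bilinear_def
  proof (intro allI conjI)
    fix A :: "real^'m^'n" and B :: "real^'k^'m"
    show "linear (\<lambda>B. A ** B)"
      by (rule linearI) (simp_all add: matrix_matrix_mult_def vec_eq_iff sum_distrib_left mult.left_commute distrib_left sum.distrib)
    show "linear (\<lambda>A. A ** B)"
      by (rule linearI) (simp_all add: matrix_matrix_mult_def vec_eq_iff sum_distrib_left mult.assoc distrib_right sum.distrib)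
  qed
  then show ?thesis by (simp add: bilinear_conv_bounded_bilinear)
qed

lemma entrywise_deriv:
  assumes "\<And>t. (\<sigma> has_real_derivative \<sigma>' t) (at t)"
  shows "(entrywise \<sigma> has_derivative (\<lambda>H. hadamard (entrywise \<sigma>' M) H)) (at (M::real^'k^'n))"
proof (rule vec_has_derivative)
  fix i
  show "((\<lambda>x. entrywise \<sigma> x $ i) has_derivative (\<lambda>h. hadamard (entrywise \<sigma>' M) h $ i)) (at M)"
  proof (rule vec_has_derivative)
    fix j
    have "((\<lambda>x. \<sigma> (x $ i $ j)) has_derivative (\<lambda>h. h $ i $ j * \<sigma>' (M $ i $ j))) (at M)"
    proof (rule DERIV_compose_FDERIV[OF assms])
      have bl: "bounded_linear (\<lambda>x::real^'k^'n. x $ i $ j)"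
        by (rule bounded_linear_compose[of "\<lambda>y. y $ j" "\<lambda>x. x $ i"]) (rule bounded_linear_vec_nth)+
      show "((\<lambda>x. x $ i $ j) has_derivative (\<lambda>h. h $ i $ j)) (at M)"
        by (rule bounded_linear.has_derivative[OF bl, of "\<lambda>x. x" "\<lambda>x. x", OF has_derivative_ident])
    qed
    then show "((\<lambda>x. entrywise \<sigma> x $ i $ j) has_derivative (\<lambda>h. hadamard (entrywise \<sigma>' M) h $ i $ j)) (at M)"
      by (simp add: entrywise_def hadamard_def mult.commute)
  qed
qed


lemmas mm_FDERIV = bounded_bilinear.FDERIV[OF bilinear_matmul]

lemma mm_left_deriv:
  "(f has_derivative f') F \<Longrightarrow> ((\<lambda>x. (V::real^'m^'n) ** f x) has_derivative (\<lambda>h. V ** f' h)) F"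
  by (rule bounded_linear.has_derivative[OF bounded_bilinear.bounded_linear_right[OF bilinear_matmul]])

lemma bcast_bl: "bounded_linear (bcast :: real^'m \<Rightarrow> real^'k^'m)"
proof -
  have "linear (bcast :: real^'m \<Rightarrow> real^'k^'m)"
    by (rule linearI) (simp_all add: bcast_def vec_eq_iff)
  then show ?thesis by (simp add: linear_conv_bounded_linear)
qed

lemma bcast_deriv:
  "(f has_derivative f') F \<Longrightarrow> ((\<lambda>x. bcast (f x)) has_derivative (\<lambda>h. bcast (f' h))) F"
  by (rule bounded_linear.has_derivative[OF bcast_bl])

lemma bcast_zero [simp]: "bcast 0 = 0"
  by (simp add: bcast_def vec_eq_iff)

lemma hadamard_zero [simp]: "hadamard M 0 = 0"
  by (simp add: hadamard_def vec_eq_iff)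

lemma inner_hadamard: "(G::real^'k^'n) \<bullet> hadamard M H = hadamard G M \<bullet> H"
  by (simp add: inner_vec_def hadamard_def mult.assoc)

lemma inner_matmul: "(Hm::real^'k^'n) \<bullet> (hK ** (Y::real^'k^'d)) = (Hm ** transpose Y) \<bullet> hK"
proof -
  have "Hm \<bullet> (hK ** Y) = (\<Sum>i\<in>UNIV. \<Sum>j\<in>UNIV. \<Sum>l\<in>UNIV. Hm $ i $ j * (hK $ i $ l * Y $ l $ j))"
    by (simp add: inner_vec_def matrix_matrix_mult_def sum_distrib_left)
  also have "\<dots> = (\<Sum>i\<in>UNIV. \<Sum>l\<in>UNIV. \<Sum>j\<in>UNIV. Hm $ i $ j * (hK $ i $ l * Y $ l $ j))"
    by (rule sum.cong[OF refl]) (rule sum.swap)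
  also have "\<dots> = (Hm ** transpose Y) \<bullet> hK"
    by (simp add: inner_vec_def matrix_matrix_mult_def transpose_def sum_distrib_left mult_ac)
  finally show ?thesis .
qed

lemma inner_ext: "(\<And>h. (a::'a::real_inner) \<bullet> h = b \<bullet> h) \<Longrightarrow> a = b"
proof -
  assume h: "\<And>h. a \<bullet> h = b \<bullet> h"
  have "(a - b) \<bullet> (a - b) = 0" using h[of "a - b"] by (simp add: inner_diff_left)
  then show "a = b" by simp
qed

lemma normsq_Pair: "(norm (a, b))\<^sup>2 = (norm a)\<^sup>2 + (norm b)\<^sup>2"
  by (simp add: norm_Pair)


theorem mainTheorem8:
  fixes \<sigma> \<sigma>' :: "real \<Rightarrow> real"
    and F :: "(real^'k^'d) \<times> 'e::euclidean_space \<Rightarrow> real"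
    and X D :: "real^'k^'d" and K :: "real^'d^'n" and bK :: "real^'n"
    and V :: "real^'n^'d" and bV :: "real^'d" and \<psi> :: 'e
  assumes sigma_deriv: "\<And>t. (\<sigma> has_real_derivative \<sigma>' t) (at t)"
    and F_diff: "F differentiable (at (blockZ \<sigma> K bK V bV X D, \<psi>))"
    and F_pos: "F (blockZ \<sigma> K bK V bV X D, \<psi>) > 0"
  shows
   "(norm (grad (loss \<sigma> F X) (D, K, bK, V, bV, \<psi>)))\<^sup>2 \<ge>
       (norm (grad (\<lambda>X'. loss \<sigma> F X' (D, K, bK, V, bV, \<psi>)) X))\<^sup>2
     + (norm (hadamard (grad (\<lambda>A'. ceZ F (V ** A' + bcast bV) \<psi>) (blockA \<sigma> K bK X D))
                       (entrywise \<sigma>' (preact K bK X D)) ** transpose (X + D)))\<^sup>2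
     + (norm (grad (\<lambda>Z'. ceZ F Z' \<psi>) (blockZ \<sigma> K bK V bV X D)
               ** transpose (blockA \<sigma> K bK X D)))\<^sup>2
   \<and> (D = 0 \<longrightarrow>
       (norm (grad (\<lambda>(K', bK', V', bV', \<psi>'). loss \<sigma> F X (0, K', bK', V', bV', \<psi>'))
                   (K, bK, V, bV, \<psi>)))\<^sup>2 \<ge>
         (norm (hadamard (grad (\<lambda>A'. ceZ F (V ** A' + bcast bV) \<psi>) (blockA \<sigma> K bK X 0))
                       (entrywise \<sigma>' (preact K bK X 0)) ** transpose X))\<^sup>2
       + (norm (grad (\<lambda>Z'. ceZ F Z' \<psi>) (blockZ \<sigma> K bK V bV X 0)
               ** transpose (blockA \<sigma> K bK X 0)))\<^sup>2)"
proof -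
  define Y where "Y = X + D"
  define P where "P = preact K bK X D"
  define A0 where "A0 = blockA \<sigma> K bK X D"
  define Z0 where "Z0 = blockZ \<sigma> K bK V bV X D"
  define \<Gamma> where "\<Gamma> = entrywise \<sigma>' P"
  define F0 where "F0 = F (Z0, \<psi>)"
  define \<theta>0 where "\<theta>0 = (D, K, bK, V, bV, \<psi>)"
  have F0pos: "F0 > 0" using F_pos by (simp add: F0_def Z0_def)
  from F_diff obtain F' where dF: "(F has_derivative F') (at (Z0, \<psi>))"
    unfolding differentiable_def Z0_def by blast
  define \<Phi>' where "\<Phi>' = (\<lambda>q. - (F' q * inverse F0))"
  have dPhi: "((\<lambda>p. - ln (F p)) has_derivative \<Phi>') (at (Z0, \<psi>))"
  proof -
    have "((\<lambda>p. ln (F p)) has_derivative (\<lambda>q. F' q * inverse (F (Z0, \<psi>)))) (at (Z0, \<psi>))"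
      by (rule DERIV_compose_FDERIV[OF DERIV_ln dF]) (use F0pos F0_def in simp)
    then show ?thesis unfolding \<Phi>'_def F0_def by (rule has_derivative_minus)
  qed
  define pre where "pre = (\<lambda>\<theta>::(real^'k^'d) \<times> (real^'d^'n) \<times> (real^'n) \<times> (real^'n^'d) \<times> (real^'d) \<times> 'e.
      preact (fst (snd \<theta>)) (fst (snd (snd \<theta>))) X (fst \<theta>))"
  define pre' where "pre' = (\<lambda>h::(real^'k^'d) \<times> (real^'d^'n) \<times> (real^'n) \<times> (real^'n^'d) \<times> (real^'d) \<times> 'e.
      K ** fst h + fst (snd h) ** Y + bcast (fst (snd (snd h))))"
  have d1: "(pre has_derivative pre') (at \<theta>0)"
  proof -
    have "(pre has_derivative (\<lambda>h. (fst (snd \<theta>0) ** (0 + fst h) + fst (snd h) ** (X + fst \<theta>0))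
            + bcast (fst (snd (snd h))))) (at \<theta>0)"
      unfolding pre_def preact_def
      by (intro has_derivative_add mm_FDERIV bcast_deriv derivative_intros)
    then show ?thesis
      by (rule has_derivative_eq_rhs) (simp add: pre'_def \<theta>0_def Y_def fun_eq_iff)
  qed
  have pre0: "pre \<theta>0 = P" by (simp add: pre_def \<theta>0_def P_def)
  have d2: "((\<lambda>\<theta>. entrywise \<sigma> (pre \<theta>)) has_derivative (\<lambda>h. hadamard \<Gamma> (pre' h))) (at \<theta>0)"
    using has_derivative_compose[OF d1 entrywise_deriv[OF sigma_deriv, of "pre \<theta>0"]]
    by (simp add: pre0 \<Gamma>_def)
  define Zf where "Zf = (\<lambda>\<theta>::(real^'k^'d) \<times> (real^'d^'n) \<times> (real^'n) \<times> (real^'n^'d) \<times> (real^'d) \<times> 'e.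
      fst (snd (snd (snd \<theta>))) ** entrywise \<sigma> (pre \<theta>) + bcast (fst (snd (snd (snd (snd \<theta>))))))"
  define Z' where "Z' = (\<lambda>h::(real^'k^'d) \<times> (real^'d^'n) \<times> (real^'n) \<times> (real^'n^'d) \<times> (real^'d) \<times> 'e.
      V ** hadamard \<Gamma> (pre' h) + fst (snd (snd (snd h))) ** A0 + bcast (fst (snd (snd (snd (snd h))))))"
  have A0eq: "entrywise \<sigma> (pre \<theta>0) = A0" by (simp add: pre0 A0_def P_def blockA_def)
  have d3: "(Zf has_derivative Z') (at \<theta>0)"
  proof -
    have "(Zf has_derivative (\<lambda>h. (fst (snd (snd (snd \<theta>0))) ** hadamard \<Gamma> (pre' h)
        + fst (snd (snd (snd h))) ** entrywise \<sigma> (pre \<theta>0)) + bcast (fst (snd (snd (snd (snd h))))))) (at \<theta>0)"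
      unfolding Zf_def
      by (intro has_derivative_add mm_FDERIV[OF _ d2] bcast_deriv derivative_intros)
    then show ?thesis
      unfolding A0eq by (rule has_derivative_eq_rhs) (simp add: Z'_def \<theta>0_def fun_eq_iff)
  qed
  have Zf0: "Zf \<theta>0 = Z0"
    by (simp add: Zf_def A0eq) (simp add: \<theta>0_def Z0_def blockZ_def A0_def)
  define L' where "L' = (\<lambda>h::(real^'k^'d) \<times> (real^'d^'n) \<times> (real^'n) \<times> (real^'n^'d) \<times> (real^'d) \<times> 'e.
      \<Phi>' (Z' h, snd (snd (snd (snd (snd h))))))"
  define Lf where "Lf = (\<lambda>\<theta>::(real^'k^'d) \<times> (real^'d^'n) \<times> (real^'n) \<times> (real^'n^'d) \<times> (real^'d) \<times> 'e.
      loss \<sigma> F X \<theta>)"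
  have Lf_eq: "Lf = (\<lambda>\<theta>. - ln (F (Zf \<theta>, snd (snd (snd (snd (snd \<theta>)))))))"
    by (auto simp: Lf_def loss_def ceZ_def fun_eq_iff Zf_def pre_def blockZ_def blockA_def split: prod.splits)
  have dL: "(Lf has_derivative L') (at \<theta>0)"
  proof -
    have dP: "((\<lambda>\<theta>. (Zf \<theta>, snd (snd (snd (snd (snd \<theta>)))))) has_derivative
        (\<lambda>h. (Z' h, snd (snd (snd (snd (snd h))))))) (at \<theta>0)"
      by (intro has_derivative_Pair d3 derivative_intros)
    have "(Zf \<theta>0, snd (snd (snd (snd (snd \<theta>0))))) = (Z0, \<psi>)" by (simp add: Zf0) (simp add: \<theta>0_def)
    then have dPhi2: "((\<lambda>p. - ln (F p)) has_derivative \<Phi>') (at (Zf \<theta>0, snd (snd (snd (snd (snd \<theta>0))))))"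
      using dPhi by simp
    show ?thesis unfolding Lf_eq L'_def
      by (rule has_derivative_compose[OF dP dPhi2])
  qed
  define g where "g = grad Lf \<theta>0"
  have gw: "\<And>h. L' h = g \<bullet> h" using grad_works(1)[OF dL] by (simp add: g_def)
  have dLg: "(Lf has_derivative (\<lambda>h. g \<bullet> h)) (at \<theta>0)" using grad_works(2)[OF dL] by (simp add: g_def)
  define GA where "GA = grad (\<lambda>A'. ceZ F (V ** A' + bcast bV) \<psi>) A0"
  have GAw: "\<And>h. \<Phi>' (V ** h, 0) = GA \<bullet> h"
  proof -
    have dI: "((\<lambda>A'. (V ** A' + bcast bV, \<psi>)) has_derivative (\<lambda>h. (V ** h + 0, 0))) (at A0)"
      by (intro has_derivative_Pair has_derivative_add mm_left_deriv derivative_intros)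
    have "(V ** A0 + bcast bV, \<psi>) = (Z0, \<psi>)" by (simp add: Z0_def blockZ_def A0_def)
    then have dPhi2: "((\<lambda>p. - ln (F p)) has_derivative \<Phi>') (at (V ** A0 + bcast bV, \<psi>))"
      using dPhi by simp
    have "((\<lambda>A'. ceZ F (V ** A' + bcast bV) \<psi>) has_derivative (\<lambda>h. \<Phi>' (V ** h + 0, 0))) (at A0)"
      unfolding ceZ_def by (rule has_derivative_compose[OF dI dPhi2])
    from grad_works(1)[OF this] show "\<And>h. \<Phi>' (V ** h, 0) = GA \<bullet> h" by (simp add: GA_def)
  qed
  define GZ where "GZ = grad (\<lambda>Z'. ceZ F Z' \<psi>) Z0"
  have GZw: "\<And>h. \<Phi>' (h, 0) = GZ \<bullet> h"
  proof -
    have dI: "((\<lambda>Z'. (Z', \<psi>)) has_derivative (\<lambda>h. (h, 0))) (at Z0)"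
      by (intro has_derivative_Pair derivative_intros)
    have "((\<lambda>Z'. ceZ F Z' \<psi>) has_derivative (\<lambda>h. \<Phi>' (h, 0))) (at Z0)"
      unfolding ceZ_def using has_derivative_compose[OF dI dPhi] by simp
    from grad_works(1)[OF this] show "\<And>h. \<Phi>' (h, 0) = GZ \<bullet> h" by (simp add: GZ_def)
  qed
  have gK: "fst (snd g) = hadamard GA \<Gamma> ** transpose Y"
  proof (rule inner_ext)
    fix h :: "real^'d^'n"
    have "fst (snd g) \<bullet> h = g \<bullet> (0, h, 0, 0, 0, 0)" by (cases g) simp
    also have "\<dots> = L' (0, h, 0, 0, 0, 0)" by (simp add: gw)
    also have "\<dots> = \<Phi>' (V ** hadamard \<Gamma> (h ** Y), 0)" by (simp add: L'_def Z'_def pre'_def)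
    also have "\<dots> = GA \<bullet> hadamard \<Gamma> (h ** Y)" by (rule GAw)
    also have "\<dots> = (hadamard GA \<Gamma> ** transpose Y) \<bullet> h" by (simp add: inner_hadamard inner_matmul)
    finally show "fst (snd g) \<bullet> h = (hadamard GA \<Gamma> ** transpose Y) \<bullet> h" .
  qed
  have gV: "fst (snd (snd (snd g))) = GZ ** transpose A0"
  proof (rule inner_ext)
    fix h :: "real^'n^'d"
    have "fst (snd (snd (snd g))) \<bullet> h = g \<bullet> (0, 0, 0, h, 0, 0)" by (cases g) auto
    also have "\<dots> = L' (0, 0, 0, h, 0, 0)" by (simp add: gw)
    also have "\<dots> = \<Phi>' (h ** A0, 0)" by (simp add: L'_def Z'_def pre'_def)
    also have "\<dots> = GZ \<bullet> (h ** A0)" by (rule GZw)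
    also have "\<dots> = (GZ ** transpose A0) \<bullet> h" by (simp add: inner_matmul)
    finally show "fst (snd (snd (snd g))) \<bullet> h = (GZ ** transpose A0) \<bullet> h" .
  qed
  have gX: "grad (\<lambda>X'. loss \<sigma> F X' (D, K, bK, V, bV, \<psi>)) X = fst g"
  proof -
    have feq: "(\<lambda>X'. loss \<sigma> F X' (D, K, bK, V, bV, \<psi>)) = (\<lambda>X'. Lf (D + (X' - X), K, bK, V, bV, \<psi>))"
      by (simp add: Lf_def loss_def blockZ_def blockA_def preact_def fun_eq_iff algebra_simps)
    have dI: "((\<lambda>X'. (D + (X' - X), K, bK, V, bV, \<psi>)) has_derivative (\<lambda>h. (0 + (h - 0), 0, 0, 0, 0, 0))) (at X)"
      by (intro has_derivative_Pair derivative_intros)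
    have "(D + (X - X), K, bK, V, bV, \<psi>) = \<theta>0" by (simp add: \<theta>0_def)
    then have dLg2: "(Lf has_derivative (\<lambda>h. g \<bullet> h)) (at (D + (X - X), K, bK, V, bV, \<psi>))" using dLg by simp
    have "((\<lambda>X'. Lf (D + (X' - X), K, bK, V, bV, \<psi>)) has_derivative (\<lambda>h. fst g \<bullet> h)) (at X)"
      using has_derivative_compose[OF dI dLg2] by (cases g) simp
    then show ?thesis unfolding feq by (rule grad_unique)
  qed
  have gR: "grad (\<lambda>q. Lf (D, q)) (K, bK, V, bV, \<psi>) = snd g"
  proof -
    have dI: "((\<lambda>q. (D, q)) has_derivative (\<lambda>h. (0, h))) (at (K, bK, V, bV, \<psi>))"
      by (intro has_derivative_Pair derivative_intros)
    have "(D, K, bK, V, bV, \<psi>) = \<theta>0" by (simp add: \<theta>0_def)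
    then have dLg2: "(Lf has_derivative (\<lambda>h. g \<bullet> h)) (at (D, K, bK, V, bV, \<psi>))" using dLg by simp
    have "((\<lambda>q. Lf (D, q)) has_derivative (\<lambda>h. snd g \<bullet> h)) (at (K, bK, V, bV, \<psi>))"
      using has_derivative_compose[OF dI dLg2] by (cases g) simp
    then show ?thesis by (rule grad_unique)
  qed
  obtain a1 a2 a3 a4 a5 a6 where gsplit: "g = (a1, a2, a3, a4, a5, a6)" by (cases g) auto
  have ineq2: "(norm (snd g))\<^sup>2 \<ge> (norm (hadamard GA \<Gamma> ** transpose Y))\<^sup>2 + (norm (GZ ** transpose A0))\<^sup>2"
    using gK gV by (simp add: gsplit normsq_Pair)
  have ineq1: "(norm g)\<^sup>2 \<ge> (norm (fst g))\<^sup>2 + (norm (hadamard GA \<Gamma> ** transpose Y))\<^sup>2 + (norm (GZ ** transpose A0))\<^sup>2"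
    using ineq2 by (simp add: gsplit normsq_Pair)
  have part1: "(norm (grad (loss \<sigma> F X) (D, K, bK, V, bV, \<psi>)))\<^sup>2 \<ge>
       (norm (grad (\<lambda>X'. loss \<sigma> F X' (D, K, bK, V, bV, \<psi>)) X))\<^sup>2
     + (norm (hadamard (grad (\<lambda>A'. ceZ F (V ** A' + bcast bV) \<psi>) (blockA \<sigma> K bK X D))
                       (entrywise \<sigma>' (preact K bK X D)) ** transpose (X + D)))\<^sup>2
     + (norm (grad (\<lambda>Z'. ceZ F Z' \<psi>) (blockZ \<sigma> K bK V bV X D)
               ** transpose (blockA \<sigma> K bK X D)))\<^sup>2"
    using ineq1 unfolding gX
    by (simp add: g_def Lf_def \<theta>0_def GA_def A0_def \<Gamma>_def P_def Y_def GZ_def Z0_def)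
  have part2: "D = 0 \<longrightarrow>
       (norm (grad (\<lambda>(K', bK', V', bV', \<psi>'). loss \<sigma> F X (0, K', bK', V', bV', \<psi>'))
                   (K, bK, V, bV, \<psi>)))\<^sup>2 \<ge>
         (norm (hadamard (grad (\<lambda>A'. ceZ F (V ** A' + bcast bV) \<psi>) (blockA \<sigma> K bK X 0))
                       (entrywise \<sigma>' (preact K bK X 0)) ** transpose X))\<^sup>2
       + (norm (grad (\<lambda>Z'. ceZ F Z' \<psi>) (blockZ \<sigma> K bK V bV X 0)
               ** transpose (blockA \<sigma> K bK X 0)))\<^sup>2"
  proof
    assume D0: "D = 0"
    have feq: "(\<lambda>(K', bK', V', bV', \<psi>'). loss \<sigma> F X (0, K', bK', V', bV', \<psi>')) = (\<lambda>q. Lf (D, q))"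
      by (simp add: fun_eq_iff split_def Lf_def D0)
    show "(norm (grad (\<lambda>(K', bK', V', bV', \<psi>'). loss \<sigma> F X (0, K', bK', V', bV', \<psi>'))
                   (K, bK, V, bV, \<psi>)))\<^sup>2 \<ge>
         (norm (hadamard (grad (\<lambda>A'. ceZ F (V ** A' + bcast bV) \<psi>) (blockA \<sigma> K bK X 0))
                       (entrywise \<sigma>' (preact K bK X 0)) ** transpose X))\<^sup>2
       + (norm (grad (\<lambda>Z'. ceZ F Z' \<psi>) (blockZ \<sigma> K bK V bV X 0)
               ** transpose (blockA \<sigma> K bK X 0)))\<^sup>2"
      using ineq2 unfolding feq gR
      by (simp add: GA_def A0_def \<Gamma>_def P_def Y_def GZ_def Z0_def D0)
  qed
  show ?thesis using part1 part2 by blast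
qed

end
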